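(* Let $K\subseteq\mathbb{R}^n$ be a convex polytope. (a) If $K$ has $m+1$ vertices, then $\Gamma_l(K)\leq\Gamma_l(K_m^{1*})$ for all $l\in\mathbb{Z}^+$. (b) If $K$ is centrally symmetric and has $2m$ vertices, then $\Gamma_l(K)\leq\Gamma_l(K_m^{1})$ for all $l\in\mathbb{Z}^+$.
   Context: For a compact convex set $K\subseteq\mathbb{R}^d$ and $l\in\mathbb{Z}^+$, the covering functional is $\Gamma_l(K)=\inf\{\gamma>0:\exists C\subseteq\mathbb{R}^d,\ |C|=l,\ K\subseteq C+\gamma K\}$. $K_m^1=\{(x_1,\dots,x_m)\in\mathbb{R}^m:\sum_{i=1}^m|x_i|\leq1\}$ and $K_m^{1*}=\{(x_1,\dots,x_m)\in\mathbb{R}^m:\sum_{i=1}^m x_i\leq1,\ x_i\geq0\ \forall i\}$. *)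

theory Defs
  imports "HOL-Analysis.Analysis"
begin

definition covering_functional :: "nat \<Rightarrow> ('a::real_vector) set \<Rightarrow> real" where
  "covering_functional l K = Inf {\<gamma>. \<gamma> > 0 \<and>
     (\<exists>C. finite C \<and> card C = l \<and> K \<subseteq> {c + \<gamma> *\<^sub>R x | c x. c \<in> C \<and> x \<in> K})}"

definition cross_polytope :: "(real ^ 'm) set" where
  "cross_polytope = {x. (\<Sum>i\<in>UNIV. \<bar>x $ i\<bar>) \<le> 1}"

definition std_simplex :: "(real ^ 'm) set" where
  "std_simplex = {x. (\<Sum>i\<in>UNIV. x $ i) \<le> 1 \<and> (\<forall>i. 0 \<le> x $ i)}"

definition vertices :: "('a::real_vector) set \<Rightarrow> 'a set" where
  "vertices K = {v. v extreme_point_of K}"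

definition centrally_symmetric :: "('a::real_vector) set \<Rightarrow> bool" where
  "centrally_symmetric K \<longleftrightarrow> (\<exists>c. \<forall>x\<in>K. 2 *\<^sub>R c - x \<in> K)"

end

theory Submission
  imports Defs
begin


lemma pad_set:
  assumes "finite A" "card A \<le> n" "infinite (UNIV::'a set)"
  shows "\<exists>B::'a set. A \<subseteq> B \<and> finite B \<and> card B = n"
proof -
  have "infinite (UNIV - A)" using assms by (simp add: Diff_infinite_finite)
  then obtain D where D: "finite D" "card D = n - card A" "D \<subseteq> UNIV - A"
    using infinite_arbitrarily_large by blast
  have "card (A \<union> D) = card A + card D"
    using D assms by (intro card_Un_disjoint) auto
  then show ?thesis using D assms by (intro exI[of _ "A \<union> D"]) auto
qed

lemma cover_affine:
  fixes S :: "('a::real_vector) set" and L :: "'a \<Rightarrow> 'b::real_vector"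
  assumes L: "linear L" and K: "K = (\<lambda>x. p + L x) ` S" and l: "l \<ge> 1"
    and ia: "infinite (UNIV::'a set)" and ib: "infinite (UNIV::'b set)"
  shows "covering_functional l K \<le> covering_functional l S"
proof -
  define PS where "PS = {\<gamma>. \<gamma> > 0 \<and>
     (\<exists>C. finite C \<and> card C = l \<and> S \<subseteq> {c + \<gamma> *\<^sub>R x | c x. c \<in> C \<and> x \<in> S})}"
  define PK where "PK = {\<gamma>. \<gamma> > 0 \<and>
     (\<exists>C. finite C \<and> card C = l \<and> K \<subseteq> {c + \<gamma> *\<^sub>R x | c x. c \<in> C \<and> x \<in> K})}"
  have "1 \<in> PS"
  proof -
    have "finite {0::'a}" "card {0::'a} \<le> l" using l by auto
    from pad_set[OF this ia] obtain B :: "'a set" where B: "{0} \<subseteq> B" "finite B" "card B = l" by blast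
    have cov: "S \<subseteq> {c + 1 *\<^sub>R x | c x. c \<in> B \<and> x \<in> S}"
    proof
      fix x assume "x \<in> S"
      then show "x \<in> {c + 1 *\<^sub>R x | c x. c \<in> B \<and> x \<in> S}"
        using B by (intro CollectI exI[of _ "0::'a"] exI[of _ x]) auto
    qed
    show ?thesis unfolding PS_def mem_Collect_eq
      by (intro conjI exI[of _ B] zero_less_one B(2) B(3) cov)
  qed
  moreover have "bdd_below PK" unfolding PK_def by (rule bdd_belowI[of _ 0]) auto
  moreover have "PS \<subseteq> PK"
  proof
    fix \<gamma> assume "\<gamma> \<in> PS"
    then obtain C where g: "\<gamma> > 0" and C: "finite C" "card C = l"
        "S \<subseteq> {c + \<gamma> *\<^sub>R x | c x. c \<in> C \<and> x \<in> S}" unfolding PS_def by auto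
    define C' where "C' = (\<lambda>c. p + L c - \<gamma> *\<^sub>R p) ` C"
    have "finite C'" "card C' \<le> l" using C unfolding C'_def by (auto intro: card_image_le)
    from pad_set[OF this ib] obtain B :: "'b set" where B: "C' \<subseteq> B" "finite B" "card B = l" by blast
    have "K \<subseteq> {c + \<gamma> *\<^sub>R x | c x. c \<in> B \<and> x \<in> K}"
    proof
      fix k assume "k \<in> K"
      then obtain s where s: "s \<in> S" "k = p + L s" using K by auto
      have "s \<in> {c + \<gamma> *\<^sub>R x | c x. c \<in> C \<and> x \<in> S}" using C(3) s(1) by (rule subsetD)
      then obtain c x where cx: "c \<in> C" "x \<in> S" "s = c + \<gamma> *\<^sub>R x" by blast
      have Ls: "L s = L c + \<gamma> *\<^sub>R L x" using L cx(3) by (simp add: linear_add linear_scale)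
      have "k = (p + L c - \<gamma> *\<^sub>R p) + \<gamma> *\<^sub>R (p + L x)"
        unfolding s(2) Ls by (simp add: algebra_simps)
      moreover have "p + L c - \<gamma> *\<^sub>R p \<in> B" using B cx unfolding C'_def by auto
      moreover have "p + L x \<in> K" using K cx by auto
      ultimately show "k \<in> {c + \<gamma> *\<^sub>R x | c x. c \<in> B \<and> x \<in> K}" by (intro CollectI exI conjI)
    qed
    then show "\<gamma> \<in> PK" using g B unfolding PK_def by auto
  qed
  ultimately have "Inf PK \<le> Inf PS" by (intro cInf_superset_mono) auto
  then show ?thesis unfolding covering_functional_def PK_def PS_def .
qed

lemma convex_sum_le:
  fixes y :: "'i \<Rightarrow> 'a::real_vector"
  assumes "convex C" "p \<in> C" "finite A" "\<And>i. i \<in> A \<Longrightarrow> a i \<ge> 0" "sum a A \<le> 1"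
    "\<And>i. i \<in> A \<Longrightarrow> y i \<in> C"
  shows "p + (\<Sum>i\<in>A. a i *\<^sub>R (y i - p)) \<in> C"
proof -
  define A' where "A' = insert None (Some ` A)"
  define a' where "a' = (\<lambda>j. case j of None \<Rightarrow> 1 - sum a A | Some i \<Rightarrow> a i)"
  define y' where "y' = (\<lambda>j. case j of None \<Rightarrow> p | Some i \<Rightarrow> y i)"
  have ne: "None \<notin> Some ` A" by auto
  have s1: "sum f (Some ` A) = sum (f \<circ> Some) A" for f :: "'i option \<Rightarrow> 'a"
    by (rule sum.reindex) auto
  have s2: "sum f (Some ` A) = sum (f \<circ> Some) A" for f :: "'i option \<Rightarrow> real"
    by (rule sum.reindex) auto
  have "(\<Sum>j\<in>A'. a' j *\<^sub>R y' j) \<in> C"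
  proof (rule convex_sum)
    show "finite A'" using assms unfolding A'_def by auto
    show "sum a' A' = 1" unfolding A'_def using assms ne
      by (simp add: s2 a'_def o_def)
    show "\<And>i. i \<in> A' \<Longrightarrow> 0 \<le> a' i" using assms unfolding A'_def a'_def by auto
    show "\<And>i. i \<in> A' \<Longrightarrow> y' i \<in> C" using assms unfolding A'_def y'_def by auto
  qed (use assms in auto)
  moreover have "(\<Sum>j\<in>A'. a' j *\<^sub>R y' j) = (1 - sum a A) *\<^sub>R p + (\<Sum>i\<in>A. a i *\<^sub>R y i)"
    unfolding A'_def using assms ne by (simp add: s1 a'_def y'_def o_def)
  moreover have "(\<Sum>i\<in>A. a i *\<^sub>R (y i - p)) = (\<Sum>i\<in>A. a i *\<^sub>R y i) - sum a A *\<^sub>R p"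
    by (simp add: scaleR_diff_right sum_subtractf scaleR_sum_left)
  moreover have "(1 - sum a A) *\<^sub>R p + Y = p + (Y - sum a A *\<^sub>R p)" for Y
    by (simp add: algebra_simps)
  ultimately show ?thesis by simp
qed



lemma infinite_vec: "infinite (UNIV :: (real^'n) set)"
  by (rule infinite_UNIV_char_0)

lemma convex_std_simplex: "convex (std_simplex :: (real^'m) set)"
  unfolding convex_def std_simplex_def
proof (intro ballI allI impI, clarsimp)
  fix x y :: "real^'m" and u v :: real
  assume a: "sum (($) x) UNIV \<le> 1" "\<forall>i. 0 \<le> x $ i" "sum (($) y) UNIV \<le> 1" "\<forall>i. 0 \<le> y $ i"
    "0 \<le> u" "0 \<le> v" "u + v = 1"
  have "(\<Sum>i\<in>UNIV. u * x $ i + v * y $ i) = u * sum (($) x) UNIV + v * sum (($) y) UNIV"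
    by (simp add: sum.distrib sum_distrib_left)
  also have "\<dots> \<le> u * 1 + v * 1" using a by (intro add_mono mult_left_mono) auto
  finally show "(\<Sum>i\<in>UNIV. u * x $ i + v * y $ i) \<le> 1"
    using a by auto
qed

lemma convex_cross: "convex (cross_polytope :: (real^'m) set)"
  unfolding convex_def cross_polytope_def
proof (intro ballI allI impI, clarsimp)
  fix x y :: "real^'m" and u v :: real
  assume a: "(\<Sum>i\<in>UNIV. \<bar>x $ i\<bar>) \<le> 1" "(\<Sum>i\<in>UNIV. \<bar>y $ i\<bar>) \<le> 1"
    "0 \<le> u" "0 \<le> v" "u + v = 1"
  have "(\<Sum>i\<in>UNIV. \<bar>u * x $ i + v * y $ i\<bar>) \<le> (\<Sum>i\<in>UNIV. u * \<bar>x $ i\<bar> + v * \<bar>y $ i\<bar>)"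
    using a by (intro sum_mono) (metis abs_mult abs_of_nonneg abs_triangle_ineq)
  also have "\<dots> = u * (\<Sum>i\<in>UNIV. \<bar>x $ i\<bar>) + v * (\<Sum>i\<in>UNIV. \<bar>y $ i\<bar>)"
    by (simp add: sum.distrib sum_distrib_left)
  also have "\<dots> \<le> u * 1 + v * 1" using a by (intro add_mono mult_left_mono) auto
  finally show "(\<Sum>i\<in>UNIV. \<bar>u * x $ i + v * y $ i\<bar>) \<le> 1" using a by auto
qed

lemma linear_L: "linear (\<lambda>x::real^'m. \<Sum>i\<in>UNIV. x $ i *\<^sub>R (w i :: 'a::real_vector))"
  by (rule linearI) (simp_all add: sum.distrib scaleR_add_left scaleR_sum_right)

lemma L_axis: "(\<Sum>j\<in>UNIV. axis i t $ j *\<^sub>R (w j :: 'a::real_vector)) = t *\<^sub>R w i"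
proof -
  have "(\<Sum>j\<in>UNIV. axis i t $ j *\<^sub>R w j) = (\<Sum>j\<in>UNIV. if j = i then t *\<^sub>R w i else 0)"
    by (intro sum.cong) (auto simp: axis_def)
  then show ?thesis by simp
qed

lemma convex_affine_image:
  assumes "linear L" "convex S"
  shows "convex ((\<lambda>x. p + L x) ` S)"
proof -
  have "(\<lambda>x. p + L x) ` S = (+) p ` (L ` S)" by (simp add: image_image)
  then show ?thesis using assms by (simp add: convex_translation convex_linear_image)
qed

lemma K_hull:
  fixes K :: "(real^'n) set"
  assumes "polytope K"
  shows "K = convex hull (vertices K)"
  unfolding vertices_def
  using Krein_Milman_Minkowski[OF polytope_imp_compact[OF assms] polytope_imp_convex[OF assms]] .

lemma part_a:
  fixes K :: "(real^'n) set"
  assumes P: "polytope K" and cV: "card (vertices K) = CARD('m) + 1" and l: "l \<ge> 1"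
  shows "covering_functional l K \<le> covering_functional l (std_simplex :: (real^'m) set)"
proof -
  let ?V = "vertices K"
  have "card ?V > 0" using cV by simp
  then have fin: "finite ?V" by (rule card_ge_0_finite)
  then obtain v0 where v0: "v0 \<in> ?V" using cV by fastforce
  have "card (?V - {v0}) = card (UNIV::'m set)" using cV v0 fin by simp
  then obtain f where f: "bij_betw f (UNIV::'m set) (?V - {v0})"
    using finite_same_card_bij[of "UNIV::'m set" "?V - {v0}"] fin by auto
  have VK: "?V \<subseteq> K" unfolding vertices_def extreme_point_of_def by auto
  define L where "L = (\<lambda>x::real^'m. \<Sum>i\<in>UNIV. x $ i *\<^sub>R (f i - v0))"
  have lin: "linear L" unfolding L_def by (rule linear_L)
  have "K = (\<lambda>x. v0 + L x) ` std_simplex"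
  proof
    have "convex hull ?V \<subseteq> (\<lambda>x. v0 + L x) ` std_simplex"
    proof (rule hull_minimal)
      show "convex ((\<lambda>x. v0 + L x) ` std_simplex)"
        by (rule convex_affine_image[OF lin convex_std_simplex])
      show "?V \<subseteq> (\<lambda>x. v0 + L x) ` std_simplex"
      proof
        fix v assume v: "v \<in> ?V"
        show "v \<in> (\<lambda>x. v0 + L x) ` std_simplex"
        proof (cases "v = v0")
          case True
          have "(0::real^'m) \<in> std_simplex" by (simp add: std_simplex_def)
          moreover have "v = v0 + L 0" using True lin by (simp add: linear_0)
          ultimately show ?thesis by blast
        next
          case False
          then obtain i where i: "v = f i" using f v unfolding bij_betw_def by auto
          have "axis i (1::real) \<in> std_simplex"
            by (simp add: std_simplex_def axis_def)
          moreover have "v = v0 + L (axis i 1)" unfolding L_def L_axis using i by simp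
          ultimately show ?thesis by blast
        qed
      qed
    qed
    then show "K \<subseteq> (\<lambda>x. v0 + L x) ` std_simplex" using K_hull[OF P] by simp
  next
    show "(\<lambda>x. v0 + L x) ` std_simplex \<subseteq> K"
    proof clarify
      fix x :: "real^'m" assume x: "x \<in> std_simplex"
      show "v0 + L x \<in> K" unfolding L_def
      proof (rule convex_sum_le)
        show "convex K" by (rule polytope_imp_convex[OF P])
        show "v0 \<in> K" using v0 VK by auto
        show "\<And>i. i \<in> UNIV \<Longrightarrow> 0 \<le> x $ i" "sum (($) x) UNIV \<le> 1"
          using x by (auto simp: std_simplex_def)
        show "\<And>i. i \<in> UNIV \<Longrightarrow> f i \<in> K" using f VK unfolding bij_betw_def by auto
      qed simp
    qed
  qed
  then show ?thesis using cover_affine[OF lin _ l infinite_vec infinite_vec] by blast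
qed



lemma reflect_extreme:
  fixes K :: "'a::real_vector set"
  assumes sym: "\<forall>x\<in>K. 2 *\<^sub>R c - x \<in> K" and v: "v extreme_point_of K"
  shows "(2 *\<^sub>R c - v) extreme_point_of K"
  unfolding extreme_point_of_def
proof (intro conjI ballI)
  show "2 *\<^sub>R c - v \<in> K" using sym v by (auto simp: extreme_point_of_def)
  fix a b assume ab: "a \<in> K" "b \<in> K"
  show "2 *\<^sub>R c - v \<notin> open_segment a b"
  proof
    assume "2 *\<^sub>R c - v \<in> open_segment a b"
    then obtain u where u: "a \<noteq> b" "0 < u" "u < 1" "2 *\<^sub>R c - v = (1 - u) *\<^sub>R a + u *\<^sub>R b"
      by (auto simp: in_segment)
    have "v = (1 - u) *\<^sub>R (2 *\<^sub>R c - a) + u *\<^sub>R (2 *\<^sub>R c - b)"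
    proof -
      have "v = 2 *\<^sub>R c - ((1 - u) *\<^sub>R a + u *\<^sub>R b)" using u(4) by (simp add: algebra_simps)
      also have "\<dots> = (1 - u) *\<^sub>R (2 *\<^sub>R c - a) + u *\<^sub>R (2 *\<^sub>R c - b)"
        by (simp add: algebra_simps)
      finally show ?thesis .
    qed
    moreover have "2 *\<^sub>R c - a \<noteq> 2 *\<^sub>R c - b" using u(1) by simp
    ultimately have "v \<in> open_segment (2 *\<^sub>R c - a) (2 *\<^sub>R c - b)"
      using u(2,3) unfolding in_segment by blast
    then show False using v ab sym unfolding extreme_point_of_def by blast
  qed
qed

lemma refl_fix: "2 *\<^sub>R c - v = (v::'a::real_vector) \<Longrightarrow> v = c"
proof -
  assume "2 *\<^sub>R c - v = v"
  then have "2 *\<^sub>R c = v + v" by (simp add: diff_eq_eq)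
  then have "(1/2::real) *\<^sub>R (2 *\<^sub>R c) = (1/2::real) *\<^sub>R (2 *\<^sub>R v)" by (simp add: scaleR_2)
  then show "v = c" by simp
qed

lemma refl_axis: "c + (-1::real) *\<^sub>R (h - c) = 2 *\<^sub>R c - (h::'a::real_vector)"
  by (simp add: algebra_simps scaleR_2)

lemma refl_abs: "(t::real) *\<^sub>R (h - c) = \<bar>t\<bar> *\<^sub>R ((if t \<ge> 0 then h else 2 *\<^sub>R c - h) - (c::'a::real_vector))"
  by (cases "t \<ge> 0") (simp_all add: algebra_simps scaleR_2)

lemma mid1: "(1/2::real) *\<^sub>R x + (1/2::real) *\<^sub>R (2 *\<^sub>R c - x) = (c::'a::real_vector)"
  by (simp add: algebra_simps)

lemma mid2: "(c::'a::real_vector) = (1 - 1/2::real) *\<^sub>R x + (1/2::real) *\<^sub>R (2 *\<^sub>R c - x)"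
  by (simp add: algebra_simps)

lemma part_b:
  fixes K :: "(real^'n) set"
  assumes P: "polytope K" and cs: "centrally_symmetric K"
    and cV: "card (vertices K) = 2 * CARD('m)" and l: "l \<ge> 1"
  shows "covering_functional l K \<le> covering_functional l (cross_polytope :: (real^'m) set)"
proof -
  let ?V = "vertices K"
  have "card ?V > 0" using cV by simp
  then have fin: "finite ?V" by (rule card_ge_0_finite)
  obtain c where sym: "\<forall>x\<in>K. 2 *\<^sub>R c - x \<in> K" using cs unfolding centrally_symmetric_def by blast
  define r where "r = (\<lambda>v::real^'n. 2 *\<^sub>R c - v)"
  have rr: "r (r v) = v" for v unfolding r_def by simp
  have VK: "?V \<subseteq> K" unfolding vertices_def extreme_point_of_def by auto
  have rV: "r v \<in> ?V" if "v \<in> ?V" for v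
    using reflect_extreme[OF sym] that unfolding vertices_def r_def by auto
  have cvx: "convex K" by (rule polytope_imp_convex[OF P])
  obtain v1 where v1: "v1 \<in> ?V" using \<open>0 < card ?V\<close> by (metis card.empty ex_in_conv less_irrefl)
  have cK: "c \<in> K"
  proof -
    have "(1/2) *\<^sub>R v1 + (1/2) *\<^sub>R (2 *\<^sub>R c - v1) \<in> K"
      using v1 VK sym by (intro convexD[OF cvx]) auto
    then show ?thesis by (simp only: mid1)
  qed
  have rne: "r v \<noteq> v" if "v \<in> ?V" for v
  proof
    assume "r v = v"
    then have vc: "v = c" unfolding r_def by (rule refl_fix)
    have "?V \<subseteq> {c}"
    proof
      fix x assume x: "x \<in> ?V"
      show "x \<in> {c}"
      proof (rule ccontr)
        assume "x \<notin> {c}"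
        then have "x \<noteq> 2 *\<^sub>R c - x" using refl_fix[of c x] by auto
        then have "c \<in> open_segment x (2 *\<^sub>R c - x)" unfolding in_segment
          by (intro conjI exI[of _ "1/2::real"] mid2) simp_all
        moreover have "x \<in> K" "2 *\<^sub>R c - x \<in> K" using x VK sym by auto
        moreover have "c extreme_point_of K" using that vc unfolding vertices_def by simp
        ultimately show False unfolding extreme_point_of_def by blast
      qed
    qed
    then have "card ?V \<le> card {c}" by (intro card_mono) auto
    then have "card ?V \<le> 1" by simp
    moreover have "CARD('m) > 0" by (rule finite_UNIV_card_ge_0) simp
    ultimately show False using cV by simp
  qed
  obtain g :: "real^'n \<Rightarrow> nat" where g: "inj_on g ?V"
    using ex_bij_betw_finite_nat[OF fin] bij_betw_def by blast
  define H where "H = {v \<in> ?V. g v < g (r v)}"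
  have HV: "H \<subseteq> ?V" unfolding H_def by auto
  have disj: "H \<inter> r ` H = {}"
  proof (rule ccontr)
    assume "H \<inter> r ` H \<noteq> {}"
    then obtain v where "v \<in> H" "r v \<in> H" by (auto simp: rr)
    then show False unfolding H_def using rr by (metis (mono_tags, lifting) mem_Collect_eq order.asym)
  qed
  have un: "?V = H \<union> r ` H"
  proof
    show "?V \<subseteq> H \<union> r ` H"
    proof
      fix v assume v: "v \<in> ?V"
      have "g v \<noteq> g (r v)" using g v rV[OF v] rne[OF v] by (metis inj_onD)
      then have "v \<in> H \<or> r v \<in> H" unfolding H_def using v rV[OF v] rr by auto
      then show "v \<in> H \<union> r ` H" using rr by (metis UnI1 UnI2 image_eqI)
    qed
    show "H \<union> r ` H \<subseteq> ?V" using HV rV by auto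
  qed
  have injr: "inj_on r H" by (metis inj_onI rr)
  have finH: "finite H" using fin HV finite_subset by blast
  have "card ?V = card H + card (r ` H)"
    using un disj finH by (metis card_Un_disjoint finite_imageI)
  also have "\<dots> = 2 * card H" using card_image[OF injr] by simp
  finally have "card H = card (UNIV :: 'm set)" using cV by simp
  then obtain h where h: "bij_betw h (UNIV::'m set) H"
    using finite_same_card_bij[of "UNIV::'m set" H] finH by auto
  have hH: "h i \<in> H" for i using h unfolding bij_betw_def by auto
  define L where "L = (\<lambda>x::real^'m. \<Sum>i\<in>UNIV. x $ i *\<^sub>R (h i - c))"
  have lin: "linear L" unfolding L_def by (rule linear_L)
  have "K = (\<lambda>x. c + L x) ` cross_polytope"
  proof
    have "convex hull ?V \<subseteq> (\<lambda>x. c + L x) ` cross_polytope"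
    proof (rule hull_minimal)
      show "convex ((\<lambda>x. c + L x) ` cross_polytope)"
        by (rule convex_affine_image[OF lin convex_cross])
      show "?V \<subseteq> (\<lambda>x. c + L x) ` cross_polytope"
      proof
        fix v assume v: "v \<in> ?V"
        have ax: "axis i t \<in> cross_polytope" if "\<bar>t\<bar> = 1" for i and t :: real
        proof -
          have "(\<Sum>j\<in>UNIV. \<bar>axis i t $ j\<bar>) = (\<Sum>j\<in>UNIV. if j = i then \<bar>t\<bar> else 0)"
            by (intro sum.cong) (auto simp: axis_def)
          then show ?thesis using that by (simp add: cross_polytope_def)
        qed
        show "v \<in> (\<lambda>x. c + L x) ` cross_polytope"
        proof (cases "v \<in> H")
          case True
          then obtain i where i: "v = h i" using h unfolding bij_betw_def by auto
          have "v = c + L (axis i 1)" unfolding L_def L_axis using i by simp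
          then show ?thesis using ax[of 1 i] by auto
        next
          case False
          then obtain i where i: "v = r (h i)" using h v un unfolding bij_betw_def by auto
          have "v = c + L (axis i (-1))" unfolding L_def L_axis using i r_def
            by (simp only: refl_axis)
          then show ?thesis using ax[of "-1" i] by auto
        qed
      qed
    qed
    then show "K \<subseteq> (\<lambda>x. c + L x) ` cross_polytope" using K_hull[OF P] by simp
  next
    show "(\<lambda>x. c + L x) ` cross_polytope \<subseteq> K"
    proof clarify
      fix x :: "real^'m" assume x: "x \<in> cross_polytope"
      define y where "y = (\<lambda>i. if x $ i \<ge> 0 then h i else r (h i))"
      have "L x = (\<Sum>i\<in>UNIV. \<bar>x $ i\<bar> *\<^sub>R (y i - c))"
        unfolding L_def y_def r_def by (intro sum.cong refl refl_abs)
      moreover have "c + (\<Sum>i\<in>UNIV. \<bar>x $ i\<bar> *\<^sub>R (y i - c)) \<in> K"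
      proof (rule convex_sum_le)
        show "convex K" by (rule cvx)
        show "c \<in> K" by (rule cK)
        show "\<And>i. i \<in> UNIV \<Longrightarrow> 0 \<le> \<bar>x $ i\<bar>" by simp
        show "(\<Sum>i\<in>UNIV. \<bar>x $ i\<bar>) \<le> 1" using x by (simp add: cross_polytope_def)
        show "\<And>i. i \<in> UNIV \<Longrightarrow> y i \<in> K" using hH HV rV VK unfolding y_def by auto
      qed simp
      ultimately show "c + L x \<in> K" by simp
    qed
  qed
  then show ?thesis using cover_affine[OF lin _ l infinite_vec infinite_vec] by blast
qed


theorem theorem4p2:
  fixes K :: "(real ^ 'n) set"
  assumes "polytope K"
  shows "(card (vertices K) = CARD('m) + 1 \<longrightarrow>
            (\<forall>l::nat. l \<ge> 1 \<longrightarrow>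
               covering_functional l K \<le> covering_functional l (std_simplex :: (real ^ 'm) set)))
       \<and> (centrally_symmetric K \<and> card (vertices K) = 2 * CARD('m) \<longrightarrow>
            (\<forall>l::nat. l \<ge> 1 \<longrightarrow>
               covering_functional l K \<le> covering_functional l (cross_polytope :: (real ^ 'm) set)))"
  using part_a[OF assms] part_b[OF assms] by blast

end
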